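(* Let $\epsilon>0$ and let $\theta\in\Theta_1\cap\mathbb{V}$ be locally optimal, i.e. $\theta=\operatorname{argsup}_{v\in\Theta\cap\mathbb{V}_{D(\theta)}}L(v)$. If $\sup_{\tau\ge0}DL(\theta,V_\tau)<\epsilon$, then \[L(\hat\theta)-L(\theta)\le\hat\theta'(x_n)\,\epsilon<\beta\epsilon.\]
   Context: Let $f$ be a probability density on $\mathbb{R}_{\ge0}$ satisfying the standing assumptions: (A1) $f$ is continuous and $f(x)>0$ for all $x>0$; (A2) there is $\beta\in\mathbb{R}$ such that for every $\lambda\in\mathbb{R}$, $\int_0^\infty e^{\lambda x}f(x)\,dx<\infty$ if and only if $\lambda<\beta$, and $\lim_{\lambda\to\beta^-}\int_0^\infty e^{\lambda x}f(x)\,dx=\infty$; (A3) for every $\lambda\in\mathbb{R}$, $\int_0^\infty e^{\lambda x}f(x)dx<\infty$ implies $\int_0^\infty x^2e^{\lambda x}f(x)dx<\infty$. Let $M$ be the measure on $\mathbb{R}_{\ge0}$ with density $f$. Fix data $x_1\le\dots\le x_n$ in $\mathbb{R}_{\ge0}$ with empirical distribution $\hat P=\frac1n\sum_{i=1}^n\delta_{x_i}$. $\Theta$ is the set of convex non-decreasing functions $\theta:\mathbb{R}_{\ge0}\to\mathbb{R}$, and $\Theta_1=\{\theta\in\Theta:\int e^{\theta}dM=1\}$. For $\theta\in\Theta$, $L(\theta):=\int\theta\,d\hat P-\int e^{\theta}\,dM+1\in[-\infty,\infty)$. For $\theta\in\Theta$ and a function $v$, $DL(\theta,v):=\lim_{t\to0^+}\frac{L(\theta+tv)-L(\theta)}{t}$.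 $\mathbb{V}$ is the set of continuous piecewise linear functions $v:\mathbb{R}_{\ge0}\to\mathbb{R}$ with finitely many breakpoints; $D(v)=\{\tau\ge0: v'(\tau-)\neq v'(\tau+)\}$ is its set of breakpoints; for finite $S\subset\mathbb{R}_{\ge0}$, $\mathbb{V}_S=\{v\in\mathbb{V}:D(v)\subseteq S\}$. For $\tau\ge0$, $V_\tau(x):=(x-\tau)^+$. It is known (Dümbgen) that $L$ has a unique maximizer $\hat\theta$ over $\Theta$; it belongs to $\Theta_1\cap\mathbb{V}$ and its breakpoints lie in $(\{0\}\cup[x_1,x_n])\setminus\{x_1,\dots,x_n\}$, so in particular $\hat\theta$ is differentiable at $x_n$. *)

theory Defs
  imports "HOL-Analysis.Analysis"
begin

text \<open>Measure M with density f on the nonnegative reals, as a function of an exponent.\<close>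
definition expint :: "(real \<Rightarrow> real) \<Rightarrow> (real \<Rightarrow> real) \<Rightarrow> ennreal" where
  "expint f g = (\<integral>\<^sup>+ x\<in>{0..}. ennreal (exp (g x) * f x) \<partial>lborel)"

definition standing_assms :: "(real \<Rightarrow> real) \<Rightarrow> real \<Rightarrow> bool" where
  "standing_assms f \<beta> \<longleftrightarrow>
     (\<forall>x\<ge>0. f x \<ge> 0) \<and>
     (\<integral>\<^sup>+ x\<in>{0..}. ennreal (f x) \<partial>lborel) = 1 \<and>
     continuous_on {0..} f \<and> (\<forall>x>0. f x > 0) \<and>
     (\<forall>l::real. expint f (\<lambda>x. l * x) < \<infinity> \<longleftrightarrow> l < \<beta>) \<and>
     ((\<lambda>l. expint f (\<lambda>x. l * x)) \<longlongrightarrow> \<infinity>) (at_left \<beta>) \<and>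
     (\<forall>l::real. expint f (\<lambda>x. l * x) < \<infinity> \<longrightarrow>
        (\<integral>\<^sup>+ x\<in>{0..}. ennreal (x\<^sup>2 * exp (l * x) * f x) \<partial>lborel) < \<infinity>)"

definition Theta :: "(real \<Rightarrow> real) set" where
  "Theta = {\<theta>. convex_on {0..} \<theta> \<and> mono_on {0..} \<theta>}"

definition Theta1 :: "(real \<Rightarrow> real) \<Rightarrow> (real \<Rightarrow> real) set" where
  "Theta1 f = {\<theta>\<in>Theta. expint f \<theta> = 1}"

definition LL :: "(real \<Rightarrow> real) \<Rightarrow> real list \<Rightarrow> (real \<Rightarrow> real) \<Rightarrow> ereal" where
  "LL f xs \<theta> = ereal (sum_list (map \<theta> xs) / real (length xs)) - enn2ereal (expint f \<theta>) + 1"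

definition DL :: "(real \<Rightarrow> real) \<Rightarrow> real list \<Rightarrow> (real \<Rightarrow> real) \<Rightarrow> (real \<Rightarrow> real) \<Rightarrow> ereal" where
  "DL f xs \<theta> v = Lim (at_right (0::real))
      (\<lambda>t. (LL f xs (\<lambda>x. \<theta> x + t * v x) - LL f xs \<theta>) / ereal t)"

definition PL :: "(real \<Rightarrow> real) set" where
  "PL = {v. continuous_on {0..} v \<and>
          (\<exists>S. finite S \<and> (\<forall>a b. 0 \<le> a \<and> a < b \<and> {a<..<b} \<inter> S = {} \<longrightarrow>
              (\<exists>c d. \<forall>x\<in>{a..b}. v x = c * x + d)))}"

definition rderiv :: "(real \<Rightarrow> real) \<Rightarrow> real \<Rightarrow> real" where
  "rderiv v \<tau> = Lim (at_right \<tau>) (\<lambda>x. (v x - v \<tau>) / (x - \<tau>))"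

definition lderiv :: "(real \<Rightarrow> real) \<Rightarrow> real \<Rightarrow> real" where
  "lderiv v \<tau> = (if \<tau> = 0 then 0 else Lim (at_left \<tau>) (\<lambda>x. (v x - v \<tau>) / (x - \<tau>)))"

definition breakpoints :: "(real \<Rightarrow> real) \<Rightarrow> real set" where
  "breakpoints v = {\<tau>. \<tau> \<ge> 0 \<and> lderiv v \<tau> \<noteq> rderiv v \<tau>}"

definition PL_on :: "real set \<Rightarrow> (real \<Rightarrow> real) set" where
  "PL_on S = {v\<in>PL. breakpoints v \<subseteq> S}"

definition Vtau :: "real \<Rightarrow> real \<Rightarrow> real" where
  "Vtau \<tau> x = max (x - \<tau>) 0"

end

theory Submission
  imports Defs
begin
lemma affine_unique:
  fixes v :: "real \<Rightarrow> real"
  assumes "p < q" "\<forall>y\<in>{p..q}. v y = c*y+d" "\<forall>y\<in>{p..q}. v y = c'*y+d'"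
  shows "c = c' \<and> d = d'"
proof -
  have 1: "c*p+d = c'*p+d'" "c*q+d = c'*q+d'" using assms by auto
  then have "(c - c') * (q - p) = 0" by (simp add: algebra_simps)
  then have "c = c'" using assms(1) by simp
  then show ?thesis using 1 by simp
qed

lemma rep_base:
  fixes v :: "real \<Rightarrow> real"
  assumes "\<forall>a b. 0 \<le> a \<and> a < b \<and> {a<..<b} \<inter> K = {} \<longrightarrow> (\<exists>c d. \<forall>x\<in>{a..b}. v x = c*x+d)"
    and "K \<subseteq> {..k}" "k \<ge> 0"
  shows "\<exists>c d. \<forall>x\<ge>k. v x = c*x+d"
proof -
  have e1: "{k<..<k+1} \<inter> K = {}" using assms(2) by auto
  obtain c d where cd: "\<forall>x\<in>{k..k+1}. v x = c*x+d" using assms(1)[rule_format, OF conjI[OF assms(3) conjI[OF _ e1]]] by auto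
  have "v x = c*x+d" if hx: "x \<ge> k" for x
  proof -
    have e2: "{k<..<x+1} \<inter> K = {}" using assms(2) by auto
    obtain c' d' where cd': "\<forall>y\<in>{k..x+1}. v y = c'*y+d'" using assms(1)[rule_format, OF conjI[OF assms(3) conjI[OF _ e2]]] hx by (meson less_add_one order_le_less_trans)
    have "c = c' \<and> d = d'"
      by (rule affine_unique[of k "k+1" v]) (use cd cd' that in auto)
    then show ?thesis using cd' that by auto
  qed
  then show ?thesis by blast
qed

lemma rep_core:
  fixes K :: "real set"
  assumes "finite K"
  shows "\<forall>v. K \<subseteq> {0<..} \<longrightarrow> (\<forall>a b. 0 \<le> a \<and> a < b \<and> {a<..<b} \<inter> K = {} \<longrightarrow> (\<exists>c d. \<forall>x\<in>{a..b}. v x = c*x+d))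
     \<longrightarrow> (\<exists>a c. \<forall>x\<ge>0. v x = a + (\<Sum>\<sigma>\<in>insert 0 K. c \<sigma> * Vtau \<sigma> x))"
  using assms
proof (induction K rule: finite_ranking_induct[where f="\<lambda>x. x"])
  case empty
  show ?case
  proof (intro allI impI)
    fix v :: "real \<Rightarrow> real"
    assume h: "\<forall>a b. 0 \<le> a \<and> a < b \<and> {a<..<b} \<inter> {} = {} \<longrightarrow> (\<exists>c d. \<forall>x\<in>{a..b}. v x = c*x+d)"
    obtain c d where cd: "\<forall>x\<ge>0. v x = c*x+d" using rep_base[of "{}" v 0] h by auto
    show "\<exists>a c. \<forall>x\<ge>0. v x = a + (\<Sum>\<sigma>\<in>insert 0 {}. c \<sigma> * Vtau \<sigma> x)"
      by (rule exI[of _ d], rule exI[of _ "\<lambda>_. c"]) (use cd in \<open>auto simp: Vtau_def\<close>)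
  qed
next
  case (insert k K')
  show ?case
  proof (cases "k \<in> K'")
    case True
    then show ?thesis using insert by (simp add: insert_absorb)
  next
    case False
    show ?thesis
    proof (intro allI impI)
      fix v :: "real \<Rightarrow> real"
      assume Kpos: "insert k K' \<subseteq> {0<..}"
        and h: "\<forall>a b. 0 \<le> a \<and> a < b \<and> {a<..<b} \<inter> insert k K' = {} \<longrightarrow> (\<exists>c d. \<forall>x\<in>{a..b}. v x = c*x+d)"
      have k0: "k > 0" using Kpos by auto
      have Klt: "\<forall>y\<in>K'. y < k"
      proof
        fix y assume "y \<in> K'" then show "y < k" using insert.hyps(2)[of y] False by (cases "y = k") auto
      qed
      define k' where "k' = Max (insert 0 K')"
      have k'ge: "k' \<ge> 0" "\<forall>y\<in>K'. y \<le> k'" unfolding k'_def using insert.hyps(1) by auto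
      have k'lt: "k' < k" unfolding k'_def using insert.hyps(1) Klt k0 by auto
      obtain c1 d1 where cd1: "\<forall>x\<in>{k'..k}. v x = c1*x+d1"
      proof -
        have "{k'<..<k} \<inter> insert k K' = {}" using k'ge(2) by fastforce
        then show ?thesis using h[rule_format, OF conjI[OF k'ge(1) conjI[OF k'lt]]] that by blast
      qed
      obtain c2 d2 where cd2: "\<forall>x\<ge>k. v x = c2*x+d2"
      proof -
        have "insert k K' \<subseteq> {..k}" using Klt by (auto simp: less_imp_le)
        then show ?thesis using rep_base[OF h _ less_imp_le[OF k0]] that by blast
      qed
      define w where "w x = v x - (c2 - c1) * Vtau k x" for x
      have hw: "\<forall>a b. 0 \<le> a \<and> a < b \<and> {a<..<b} \<inter> K' = {} \<longrightarrow> (\<exists>c d. \<forall>x\<in>{a..b}. w x = c*x+d)"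
      proof (intro allI impI)
        fix a b :: real
        assume ab: "0 \<le> a \<and> a < b \<and> {a<..<b} \<inter> K' = {}"
        show "\<exists>c d. \<forall>x\<in>{a..b}. w x = c*x+d"
        proof (cases "k \<in> {a<..<b}")
          case False
          then obtain c d where cd: "\<forall>x\<in>{a..b}. v x = c*x+d" using h[rule_format, of a b] ab by auto
          show ?thesis
          proof (cases "b \<le> k")
            case True
            then show ?thesis using cd by (auto simp: w_def Vtau_def)
          next
            case nb: False
            then have "a \<ge> k" using False ab by auto
            then have "\<forall>x\<in>{a..b}. w x = (c - (c2 - c1))*x + (d + (c2-c1)*k)"
              using cd by (auto simp: w_def Vtau_def algebra_simps)
            then show ?thesis by blast
          qed
        next
          case True
          have "\<forall>y\<in>K'. y \<le> a"
          proof
            fix y assume "y \<in> K'"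
            then have "y < k" "y \<notin> {a<..<b}" using Klt ab by auto
            then show "y \<le> a" using True by auto
          qed
          then have "k' \<le> a" unfolding k'_def using insert.hyps(1) ab by auto
          have "\<forall>x\<in>{a..b}. w x = c1*x+d1"
          proof
            fix x assume x: "x \<in> {a..b}"
            have vk: "c1*k+d1 = c2*k+d2" using cd1[rule_format, of k] cd2[rule_format, of k] k'lt by simp
            show "w x = c1*x+d1"
            proof (cases "x \<le> k")
              case True
              then show ?thesis using cd1 x \<open>k' \<le> a\<close> by (auto simp: w_def Vtau_def)
            next
              case False
              then have "w x = c2*x+d2 - (c2-c1)*(x-k)" using cd2 by (auto simp: w_def Vtau_def)
              then show ?thesis using vk by (simp add: algebra_simps)
            qed
          qed
          then show ?thesis by blast
        qed
      qed
      obtain a c where ac: "\<forall>x\<ge>0. w x = a + (\<Sum>\<sigma>\<in>insert 0 K'. c \<sigma> * Vtau \<sigma> x)"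
        using insert.IH Kpos hw by blast
      define c' where "c' = c(k := c2 - c1)"
      have kn: "k \<notin> insert 0 K'" using False k0 by auto
      have "\<forall>x\<ge>0. v x = a + (\<Sum>\<sigma>\<in>insert 0 (insert k K'). c' \<sigma> * Vtau \<sigma> x)"
      proof (intro allI impI)
        fix x :: real assume "x \<ge> 0"
        have "(\<Sum>\<sigma>\<in>insert 0 (insert k K'). c' \<sigma> * Vtau \<sigma> x) = (\<Sum>\<sigma>\<in>insert k (insert 0 K'). c' \<sigma> * Vtau \<sigma> x)"
          by (simp add: insert_commute)
        also have "\<dots> = c' k * Vtau k x + (\<Sum>\<sigma>\<in>insert 0 K'. c' \<sigma> * Vtau \<sigma> x)"
          using kn insert.hyps(1) by (simp add: sum.insert)
        also have "(\<Sum>\<sigma>\<in>insert 0 K'. c' \<sigma> * Vtau \<sigma> x) = (\<Sum>\<sigma>\<in>insert 0 K'. c \<sigma> * Vtau \<sigma> x)"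
          using kn by (intro sum.cong) (auto simp: c'_def)
        finally show "v x = a + (\<Sum>\<sigma>\<in>insert 0 (insert k K'). c' \<sigma> * Vtau \<sigma> x)"
          using ac \<open>x \<ge> 0\<close> by (auto simp: w_def c'_def)
      qed
      then show "\<exists>a c. \<forall>x\<ge>0. v x = a + (\<Sum>\<sigma>\<in>insert 0 (insert k K'). c \<sigma> * Vtau \<sigma> x)" by blast
    qed
  qed
qed

lemma rep_PL:
  assumes "v \<in> PL"
  shows "\<exists>T a c. finite T \<and> T \<subseteq> {0..} \<and> (\<forall>x\<ge>0. v x = a + (\<Sum>\<sigma>\<in>T. c \<sigma> * Vtau \<sigma> x))"
proof -
  obtain S where S: "finite S" "\<forall>a b. 0 \<le> a \<and> a < b \<and> {a<..<b} \<inter> S = {} \<longrightarrow> (\<exists>c d. \<forall>x\<in>{a..b}. v x = c * x + d)"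
    using assms unfolding PL_def by blast
  define K where "K = S \<inter> {0<..}"
  have fK: "finite K" using S(1) K_def by auto
  have hK: "\<forall>a b. 0 \<le> a \<and> a < b \<and> {a<..<b} \<inter> K = {} \<longrightarrow> (\<exists>c d. \<forall>x\<in>{a..b}. v x = c * x + d)"
  proof (intro allI impI)
    fix a b :: real assume ab: "0 \<le> a \<and> a < b \<and> {a<..<b} \<inter> K = {}"
    then have "{a<..<b} \<inter> S = {}" unfolding K_def by auto
    then show "\<exists>c d. \<forall>x\<in>{a..b}. v x = c * x + d" using S(2) ab by blast
  qed
  obtain a c where "\<forall>x\<ge>0. v x = a + (\<Sum>\<sigma>\<in>insert 0 K. c \<sigma> * Vtau \<sigma> x)"
    using rep_core[OF fK] hK unfolding K_def by blast
  moreover have "finite (insert 0 K)" "insert 0 K \<subseteq> {0..}" using fK K_def by auto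
  ultimately show ?thesis by blast
qed

lemma rep_diff:
  assumes "\<forall>x\<ge>0. v x = a + (\<Sum>\<sigma>\<in>T. c \<sigma> * Vtau \<sigma> x)" "x \<ge> 0" "y \<ge> 0"
  shows "v x - v y = (\<Sum>\<sigma>\<in>T. c \<sigma> * (Vtau \<sigma> x - Vtau \<sigma> y))"
  using assms by (simp add: sum_subtractf algebra_simps)

lemma coef_nonneg:
  fixes v :: "real \<Rightarrow> real"
  assumes T: "finite T" "T \<subseteq> {0..}" and rep: "\<forall>x\<ge>0. v x = a + (\<Sum>\<sigma>\<in>T. c \<sigma> * Vtau \<sigma> x)"
    and cv: "convex_on {0..} v" and mo: "mono_on {0..} v"
    and \<tau>: "\<tau> \<in> T"
  shows "c \<tau> \<ge> 0"
proof (cases "\<tau> = 0")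
  case True
  have ev: "\<forall>\<^sub>F d in at_right 0. \<forall>\<sigma>\<in>T-{0}. d \<in> {0<..<\<sigma>}"
  proof (rule eventually_ball_finite)
    show "finite (T-{0})" using T by auto
    show "\<forall>\<sigma>\<in>T-{0}. \<forall>\<^sub>F d in at_right 0. d \<in> {0<..<\<sigma>}"
    proof
      fix \<sigma> assume "\<sigma> \<in> T-{0}" then have "(0::real) < \<sigma>" using T by force
      then show "\<forall>\<^sub>F d in at_right 0. d \<in> {0<..<\<sigma>}" by (rule eventually_at_right_real)
    qed
  qed
  obtain d where d: "\<forall>\<sigma>\<in>T-{0}. d \<in> {0<..<\<sigma>}" "d > 0"
    using eventually_happens'[OF _ eventually_conj[OF ev eventually_at_right_less]] by auto
  have "v d - v 0 = (\<Sum>\<sigma>\<in>T. c \<sigma> * (Vtau \<sigma> d - Vtau \<sigma> 0))"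
    using rep_diff[OF rep, of d 0] d by simp
  also have "\<dots> = (\<Sum>\<sigma>\<in>T. if \<sigma> = 0 then c \<sigma> * d else 0)"
  proof (rule sum.cong)
    fix \<sigma> assume s: "\<sigma> \<in> T"
    show "c \<sigma> * (Vtau \<sigma> d - Vtau \<sigma> 0) = (if \<sigma> = 0 then c \<sigma> * d else 0)"
    proof (cases "\<sigma> = 0")
      case True then show ?thesis using d by (simp add: Vtau_def)
    next
      case False
      then have "d < \<sigma>" "\<sigma> \<ge> 0" using d s T by auto
      then show ?thesis using False by (simp add: Vtau_def)
    qed
  qed simp
  also have "\<dots> = c 0 * d" using \<tau> True T by (simp add: sum.delta)
  finally have "c 0 * d = v d - v 0" ..
  moreover have "v 0 \<le> v d" using mo d unfolding mono_on_def by auto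
  ultimately have "c 0 * d \<ge> 0" by simp
  then show ?thesis using d True by (simp add: zero_le_mult_iff)
next
  case False
  then have tp: "\<tau> > 0" using \<tau> T by force
  have ev: "\<forall>\<^sub>F d in at_right 0. \<forall>\<sigma>\<in>T-{\<tau>}. d \<in> {0<..<\<bar>\<sigma> - \<tau>\<bar>}"
  proof (rule eventually_ball_finite)
    show "finite (T-{\<tau>})" using T by auto
    show "\<forall>\<sigma>\<in>T-{\<tau>}. \<forall>\<^sub>F d in at_right 0. d \<in> {0<..<\<bar>\<sigma> - \<tau>\<bar>}"
    proof
      fix \<sigma> assume "\<sigma> \<in> T-{\<tau>}" then have "(0::real) < \<bar>\<sigma> - \<tau>\<bar>" by auto
      then show "\<forall>\<^sub>F d in at_right 0. d \<in> {0<..<\<bar>\<sigma> - \<tau>\<bar>}" by (rule eventually_at_right_real)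
    qed
  qed
  obtain d where d: "\<forall>\<sigma>\<in>T-{\<tau>}. d \<in> {0<..<\<bar>\<sigma> - \<tau>\<bar>}" "d \<in> {0<..<\<tau>}"
    using eventually_happens'[OF _ eventually_conj[OF ev eventually_at_right_real[OF tp]]] by auto
  have "v (\<tau>-d) + v (\<tau>+d) - 2 * v \<tau> = (\<Sum>\<sigma>\<in>T. c \<sigma> * (Vtau \<sigma> (\<tau>-d) + Vtau \<sigma> (\<tau>+d) - 2 * Vtau \<sigma> \<tau>))"
    using rep d tp by (simp add: sum.distrib sum_subtractf sum_distrib_left algebra_simps)
  also have "\<dots> = (\<Sum>\<sigma>\<in>T. if \<sigma> = \<tau> then c \<sigma> * d else 0)"
  proof (rule sum.cong)
    fix \<sigma> assume s: "\<sigma> \<in> T"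
    show "c \<sigma> * (Vtau \<sigma> (\<tau>-d) + Vtau \<sigma> (\<tau>+d) - 2 * Vtau \<sigma> \<tau>) = (if \<sigma> = \<tau> then c \<sigma> * d else 0)"
    proof (cases "\<sigma> = \<tau>")
      case True then show ?thesis using d by (simp add: Vtau_def)
    next
      case False
      then have "d < \<bar>\<sigma> - \<tau>\<bar>" using d s by auto
      then have "\<sigma> < \<tau> - d \<or> \<sigma> > \<tau> + d" by auto
      then show ?thesis using False d by (auto simp: Vtau_def)
    qed
  qed simp
  also have "\<dots> = c \<tau> * d" using \<tau> T by (simp add: sum.delta)
  finally have eq: "v (\<tau>-d) + v (\<tau>+d) - 2 * v \<tau> = c \<tau> * d" .
  have "v ((1 - 1/2) *\<^sub>R (\<tau>-d) + (1/2) *\<^sub>R (\<tau>+d)) \<le> (1 - 1/2) * v (\<tau>-d) + (1/2) * v (\<tau>+d)"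
    by (rule convex_onD[OF cv]) (use d in auto)
  moreover have "(1 - 1/2) *\<^sub>R (\<tau>-d) + (1/2) *\<^sub>R (\<tau>+d) = \<tau>" by (simp add: field_simps)
  ultimately have "v \<tau> \<le> (v (\<tau>-d) + v (\<tau>+d)) / 2" by (simp add: algebra_simps)
  then have "c \<tau> * d \<ge> 0" using eq by simp
  then show ?thesis using d by (simp add: zero_le_mult_iff)
qed

lemma quot_right:
  fixes v :: "real \<Rightarrow> real"
  assumes T: "finite T" "T \<subseteq> {0..}" and rep: "\<forall>x\<ge>0. v x = a + (\<Sum>\<sigma>\<in>T. c \<sigma> * Vtau \<sigma> x)"
    and t0: "\<tau> \<ge> 0"
  shows "((\<lambda>x. (v x - v \<tau>) / (x - \<tau>)) \<longlongrightarrow> (\<Sum>\<sigma>\<in>T. if \<sigma> \<le> \<tau> then c \<sigma> else 0)) (at_right \<tau>)"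
proof -
  have ev: "\<forall>\<^sub>F x in at_right \<tau>. \<forall>\<sigma>\<in>{\<sigma>\<in>T. \<sigma> > \<tau>}. x \<in> {\<tau><..<\<sigma>}"
  proof (rule eventually_ball_finite)
    show "finite {\<sigma>\<in>T. \<sigma> > \<tau>}" using T by auto
    show "\<forall>\<sigma>\<in>{\<sigma>\<in>T. \<sigma> > \<tau>}. \<forall>\<^sub>F x in at_right \<tau>. x \<in> {\<tau><..<\<sigma>}"
    proof
      fix \<sigma> assume "\<sigma> \<in> {\<sigma>\<in>T. \<sigma> > \<tau>}" then have "\<tau> < \<sigma>" by auto
      then show "\<forall>\<^sub>F x in at_right \<tau>. x \<in> {\<tau><..<\<sigma>}" by (rule eventually_at_right_real)
    qed
  qed
  have "\<forall>\<^sub>F x in at_right \<tau>. (v x - v \<tau>) / (x - \<tau>) = (\<Sum>\<sigma>\<in>T. if \<sigma> \<le> \<tau> then c \<sigma> else 0)"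
    using eventually_conj[OF ev eventually_at_right_less]
  proof eventually_elim
    case (elim x)
    then have x: "x > \<tau>" "\<forall>\<sigma>\<in>T. \<sigma> > \<tau> \<longrightarrow> x < \<sigma>" by auto
    have "v x - v \<tau> = (\<Sum>\<sigma>\<in>T. c \<sigma> * (Vtau \<sigma> x - Vtau \<sigma> \<tau>))"
      using rep_diff[OF rep, of x \<tau>] x t0 by simp
    also have "\<dots> = (\<Sum>\<sigma>\<in>T. (if \<sigma> \<le> \<tau> then c \<sigma> else 0) * (x - \<tau>))"
    proof (rule sum.cong)
      fix \<sigma> assume s: "\<sigma> \<in> T"
      show "c \<sigma> * (Vtau \<sigma> x - Vtau \<sigma> \<tau>) = (if \<sigma> \<le> \<tau> then c \<sigma> else 0) * (x - \<tau>)"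
        using x s by (auto simp: Vtau_def)
    qed simp
    also have "\<dots> = (\<Sum>\<sigma>\<in>T. if \<sigma> \<le> \<tau> then c \<sigma> else 0) * (x - \<tau>)"
      by (simp add: sum_distrib_right)
    finally show ?case using x by simp
  qed
  then show ?thesis by (rule tendsto_eventually)
qed

lemma quot_left:
  fixes v :: "real \<Rightarrow> real"
  assumes T: "finite T" "T \<subseteq> {0..}" and rep: "\<forall>x\<ge>0. v x = a + (\<Sum>\<sigma>\<in>T. c \<sigma> * Vtau \<sigma> x)"
    and t0: "\<tau> > 0"
  shows "((\<lambda>x. (v x - v \<tau>) / (x - \<tau>)) \<longlongrightarrow> (\<Sum>\<sigma>\<in>T. if \<sigma> < \<tau> then c \<sigma> else 0)) (at_left \<tau>)"
proof -
  have ev: "\<forall>\<^sub>F x in at_left \<tau>. \<forall>\<sigma>\<in>insert 0 {\<sigma>\<in>T. \<sigma> < \<tau>}. x \<in> {\<sigma><..<\<tau>}"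
  proof (rule eventually_ball_finite)
    show "finite (insert 0 {\<sigma>\<in>T. \<sigma> < \<tau>})" using T by auto
    show "\<forall>\<sigma>\<in>insert 0 {\<sigma>\<in>T. \<sigma> < \<tau>}. \<forall>\<^sub>F x in at_left \<tau>. x \<in> {\<sigma><..<\<tau>}"
    proof
      fix \<sigma> assume "\<sigma> \<in> insert 0 {\<sigma>\<in>T. \<sigma> < \<tau>}" then have "\<tau> > \<sigma>" using t0 by auto
      then show "\<forall>\<^sub>F x in at_left \<tau>. x \<in> {\<sigma><..<\<tau>}" by (rule eventually_at_left_real)
    qed
  qed
  have "\<forall>\<^sub>F x in at_left \<tau>. (v x - v \<tau>) / (x - \<tau>) = (\<Sum>\<sigma>\<in>T. if \<sigma> < \<tau> then c \<sigma> else 0)"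
    using ev
  proof eventually_elim
    case (elim x)
    then have x: "x < \<tau>" "x > 0" "\<forall>\<sigma>\<in>T. \<sigma> < \<tau> \<longrightarrow> \<sigma> < x" by auto
    have "v x - v \<tau> = (\<Sum>\<sigma>\<in>T. c \<sigma> * (Vtau \<sigma> x - Vtau \<sigma> \<tau>))"
      using rep_diff[OF rep, of x \<tau>] x t0 by simp
    also have "\<dots> = (\<Sum>\<sigma>\<in>T. (if \<sigma> < \<tau> then c \<sigma> else 0) * (x - \<tau>))"
    proof (rule sum.cong)
      fix \<sigma> assume s: "\<sigma> \<in> T"
      show "c \<sigma> * (Vtau \<sigma> x - Vtau \<sigma> \<tau>) = (if \<sigma> < \<tau> then c \<sigma> else 0) * (x - \<tau>)"
        using x s by (auto simp: Vtau_def)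
    qed simp
    also have "\<dots> = (\<Sum>\<sigma>\<in>T. if \<sigma> < \<tau> then c \<sigma> else 0) * (x - \<tau>)"
      by (simp add: sum_distrib_right)
    finally show ?case using x by simp
  qed
  then show ?thesis by (rule tendsto_eventually)
qed

definition fz :: "(real \<Rightarrow> real) \<Rightarrow> real \<Rightarrow> real" where
  "fz f x = indicator {0..} x * f x"

lemma A_parts:
  assumes "standing_assms f \<beta>"
  shows "\<forall>x\<ge>0. f x \<ge> 0" "continuous_on {0..} f"
    "\<And>l. expint f (\<lambda>x. l * x) < \<infinity> \<longleftrightarrow> l < \<beta>"
    "\<And>l. expint f (\<lambda>x. l * x) < \<infinity> \<Longrightarrow> (\<integral>\<^sup>+ x\<in>{0..}. ennreal (x\<^sup>2 * exp (l * x) * f x) \<partial>lborel) < \<infinity>"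
  using assms unfolding standing_assms_def by auto

lemma fz_meas[measurable]:
  assumes "standing_assms f \<beta>"
  shows "fz f \<in> borel_measurable borel"
proof -
  have "(\<lambda>x. indicator {0..} x *\<^sub>R f x) \<in> borel_measurable borel"
    by (rule borel_measurable_continuous_on_indicator) (use A_parts(2)[OF assms] in auto)
  then show ?thesis unfolding fz_def by (simp add: fun_eq_iff)
qed

lemma fz_nonneg: "standing_assms f \<beta> \<Longrightarrow> fz f x \<ge> 0"
  using A_parts(1)[of f \<beta>] by (auto simp: fz_def indicator_def)

lemma expint_eq: "expint f g = (\<integral>\<^sup>+x. ennreal (exp (g x) * fz f x) \<partial>lborel)"
  unfolding expint_def fz_def
  by (intro nn_integral_cong) (auto simp: indicator_def)

lemma expint_cong: "(\<And>x. x \<ge> 0 \<Longrightarrow> g x = h x) \<Longrightarrow> expint f g = expint f h"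
  unfolding expint_def by (intro nn_integral_cong) (auto simp: indicator_def)

lemma Vtau_meas[measurable]: "Vtau \<sigma> \<in> borel_measurable borel"
  unfolding Vtau_def by measurable

lemma Vtau_nonneg: "Vtau \<sigma> x \<ge> 0" by (simp add: Vtau_def)

lemma lin_int:
  assumes A: "standing_assms f \<beta>" and l: "l < \<beta>"
  shows "integrable lborel (\<lambda>x. (1 + x\<^sup>2) * exp (l*x) * fz f x)"
proof -
  note [measurable] = fz_meas[OF A]
  have e1: "expint f (\<lambda>x. l * x) < \<infinity>" using A_parts(3)[OF A] l by auto
  have e2: "(\<integral>\<^sup>+ x\<in>{0..}. ennreal (x\<^sup>2 * exp (l * x) * f x) \<partial>lborel) < \<infinity>" using A_parts(4)[OF A e1] .
  have e1': "(\<integral>\<^sup>+x. ennreal (exp (l * x) * fz f x) \<partial>lborel) < \<infinity>" using e1 by (simp add: expint_eq)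
  have "(\<integral>\<^sup>+ x\<in>{0..}. ennreal (x\<^sup>2 * exp (l * x) * f x) \<partial>lborel) = (\<integral>\<^sup>+x. ennreal (x\<^sup>2 * exp (l * x) * fz f x) \<partial>lborel)"
    unfolding fz_def by (intro nn_integral_cong) (auto simp: indicator_def)
  with e2 have e2': "(\<integral>\<^sup>+x. ennreal (x\<^sup>2 * exp (l * x) * fz f x) \<partial>lborel) < \<infinity>" by simp
  have "(\<integral>\<^sup>+x. ennreal ((1 + x\<^sup>2) * exp (l*x) * fz f x) \<partial>lborel)
      = (\<integral>\<^sup>+x. ennreal (exp (l * x) * fz f x) + ennreal (x\<^sup>2 * exp (l * x) * fz f x) \<partial>lborel)"
    using fz_nonneg[OF A] by (intro nn_integral_cong) (auto simp: ennreal_plus[symmetric] algebra_simps simp del: ennreal_plus)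
  also have "\<dots> = (\<integral>\<^sup>+x. ennreal (exp (l * x) * fz f x) \<partial>lborel) + (\<integral>\<^sup>+x. ennreal (x\<^sup>2 * exp (l * x) * fz f x) \<partial>lborel)"
    by (rule nn_integral_add) auto
  also have "\<dots> < \<infinity>" using e1' e2' by (simp add: ennreal_add_less_top)
  finally show ?thesis
    by (intro integrableI_nonneg) (use fz_nonneg[OF A] in auto)
qed

lemma rep_bounds:
  fixes T :: "real set"
  assumes "finite T" "T \<subseteq> {0..}" "\<forall>\<sigma>\<in>T. c \<sigma> \<ge> 0" "x \<ge> 0"
  shows "a \<le> a + (\<Sum>\<sigma>\<in>T. c \<sigma> * Vtau \<sigma> x)"
    "a + (\<Sum>\<sigma>\<in>T. c \<sigma> * Vtau \<sigma> x) \<le> a + (\<Sum>\<sigma>\<in>T. c \<sigma>) * x"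
    "a - (\<Sum>\<sigma>\<in>T. c \<sigma> * \<sigma>) + (\<Sum>\<sigma>\<in>T. c \<sigma>) * x \<le> a + (\<Sum>\<sigma>\<in>T. c \<sigma> * Vtau \<sigma> x)"
proof -
  show "a \<le> a + (\<Sum>\<sigma>\<in>T. c \<sigma> * Vtau \<sigma> x)"
    using assms by (auto intro!: sum_nonneg simp: Vtau_nonneg)
  have "(\<Sum>\<sigma>\<in>T. c \<sigma> * Vtau \<sigma> x) \<le> (\<Sum>\<sigma>\<in>T. c \<sigma> * x)"
    using assms by (intro sum_mono mult_left_mono) (auto simp: Vtau_def)
  then show "a + (\<Sum>\<sigma>\<in>T. c \<sigma> * Vtau \<sigma> x) \<le> a + (\<Sum>\<sigma>\<in>T. c \<sigma>) * x"
    by (simp add: sum_distrib_right)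
  have "(\<Sum>\<sigma>\<in>T. c \<sigma> * (x - \<sigma>)) \<le> (\<Sum>\<sigma>\<in>T. c \<sigma> * Vtau \<sigma> x)"
    using assms by (intro sum_mono mult_left_mono) (auto simp: Vtau_def)
  then show "a - (\<Sum>\<sigma>\<in>T. c \<sigma> * \<sigma>) + (\<Sum>\<sigma>\<in>T. c \<sigma>) * x \<le> a + (\<Sum>\<sigma>\<in>T. c \<sigma> * Vtau \<sigma> x)"
    by (simp add: sum_distrib_right algebra_simps sum_subtractf sum_distrib_left)
qed

locale dsetup =
  fixes f :: "real \<Rightarrow> real" and \<beta> :: real and T :: "real set" and a :: real and c :: "real \<Rightarrow> real"
  assumes A: "standing_assms f \<beta>" and fT: "finite T" and T0: "T \<subseteq> {0..}" and cnn: "\<forall>\<sigma>\<in>T. c \<sigma> \<ge> 0"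
    and E1: "expint f (\<lambda>x. a + (\<Sum>\<sigma>\<in>T. c \<sigma> * Vtau \<sigma> x)) = 1"
begin

definition th where "th x = a + (\<Sum>\<sigma>\<in>T. c \<sigma> * Vtau \<sigma> x)"
definition D where "D = (\<Sum>\<sigma>\<in>T. c \<sigma>)"
definition dens where "dens x = exp (th x) * fz f x"
definition N where "N = density lborel (\<lambda>x. ennreal (dens x))"

lemma th_meas[measurable]: "th \<in> borel_measurable borel"
  unfolding th_def by measurable

lemma fzm[measurable]: "fz f \<in> borel_measurable borel" using fz_meas[OF A] .

lemma dens_meas[measurable]: "dens \<in> borel_measurable borel"
  unfolding dens_def by measurable

lemma dens_nonneg: "dens x \<ge> 0" unfolding dens_def using fz_nonneg[OF A] by simp

lemma D_nonneg: "D \<ge> 0" unfolding D_def using cnn by (simp add: sum_nonneg)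

lemma th_bounds:
  assumes "x \<ge> 0"
  shows "a \<le> th x" "th x \<le> a + D * x" "a - (\<Sum>\<sigma>\<in>T. c \<sigma> * \<sigma>) + D * x \<le> th x"
  using rep_bounds[OF fT T0 cnn assms, of a] unfolding th_def D_def by auto

lemma E1': "expint f th = 1" using E1 unfolding th_def[abs_def] .

lemma D_less: "D < \<beta>"
proof -
  define a2 where "a2 = a - (\<Sum>\<sigma>\<in>T. c \<sigma> * \<sigma>)"
  have "expint f (\<lambda>x. D * x) = (\<integral>\<^sup>+x. ennreal (exp (D * x) * fz f x) \<partial>lborel)" by (simp add: expint_eq)
  also have "\<dots> \<le> (\<integral>\<^sup>+x. ennreal (exp (- a2)) * ennreal (exp (th x) * fz f x) \<partial>lborel)"
  proof (intro nn_integral_mono)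
    fix x :: real
    show "ennreal (exp (D * x) * fz f x) \<le> ennreal (exp (- a2)) * ennreal (exp (th x) * fz f x)"
    proof (cases "x \<ge> 0")
      case True
      have "D * x \<le> - a2 + th x" using th_bounds(3)[OF True] unfolding a2_def by simp
      then have "exp (D * x) \<le> exp (- a2) * exp (th x)" by (simp add: exp_add[symmetric])
      then have "exp (D * x) * fz f x \<le> exp (- a2) * exp (th x) * fz f x"
        using fz_nonneg[OF A] by (intro mult_right_mono) auto
      then show ?thesis using fz_nonneg[OF A, of x] by (simp add: ennreal_mult[symmetric] mult.assoc)
    next
      case False
      then show ?thesis by (simp add: fz_def)
    qed
  qed
  also have "\<dots> = ennreal (exp (- a2)) * (\<integral>\<^sup>+x. ennreal (exp (th x) * fz f x) \<partial>lborel)"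
    by (rule nn_integral_cmult) measurable
  also have "(\<integral>\<^sup>+x. ennreal (exp (th x) * fz f x) \<partial>lborel) = 1" using E1' by (simp add: expint_eq)
  finally have "expint f (\<lambda>x. D * x) < \<infinity>" by (simp add: order_le_less_trans)
  then show ?thesis using A_parts(3)[OF A] by blast
qed

lemma int_N:
  assumes g[measurable]: "g \<in> borel_measurable borel" and l: "0 \<le> l" "D + l < \<beta>"
    and bnd: "\<forall>x\<ge>0. \<bar>g x\<bar> \<le> \<alpha> * (1 + x\<^sup>2) * exp (l * x)"
  shows "integrable N g"
proof -
  have "integrable lborel (\<lambda>x. \<alpha> * exp a * ((1 + x\<^sup>2) * exp ((D + l)*x) * fz f x))"
    using lin_int[OF A l(2)] by (rule integrable_mult_right)
  then have "integrable lborel (\<lambda>x. dens x *\<^sub>R g x)"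
  proof (rule Bochner_Integration.integrable_bound)
    show "(\<lambda>x. dens x *\<^sub>R g x) \<in> borel_measurable lborel" by measurable
    show "AE x in lborel. norm (dens x *\<^sub>R g x) \<le> norm (\<alpha> * exp a * ((1 + x\<^sup>2) * exp ((D + l)*x) * fz f x))"
    proof (intro AE_I2)
      fix x :: real
      show "norm (dens x *\<^sub>R g x) \<le> norm (\<alpha> * exp a * ((1 + x\<^sup>2) * exp ((D + l)*x) * fz f x))"
      proof (cases "x \<ge> 0")
        case False then show ?thesis by (simp add: dens_def fz_def)
      next
        case True
        have fx: "fz f x \<ge> 0" using fz_nonneg[OF A] .
        have "norm (dens x *\<^sub>R g x) = exp (th x) * fz f x * \<bar>g x\<bar>"
          using fx by (simp add: dens_def abs_mult)
        also have "\<dots> \<le> exp (a + D * x) * fz f x * (\<alpha> * (1 + x\<^sup>2) * exp (l * x))"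
          using th_bounds(2)[OF True] bnd True fx
          by (intro mult_mono) auto
        also have "\<dots> = \<alpha> * exp a * ((1 + x\<^sup>2) * exp ((D + l)*x) * fz f x)"
          by (simp add: exp_add[symmetric] algebra_simps)
        also have "\<dots> \<le> norm (\<alpha> * exp a * ((1 + x\<^sup>2) * exp ((D + l)*x) * fz f x))" by simp
        finally show ?thesis .
      qed
    qed
  qed
  then show ?thesis unfolding N_def
    by (subst integrable_density) (auto simp: dens_nonneg)
qed

end

definition Pm :: "real list \<Rightarrow> (real \<Rightarrow> real) \<Rightarrow> real" where
  "Pm xs g = sum_list (map g xs) / real (length xs)"

lemma LL_Pm: "LL f xs g = ereal (Pm xs g) - enn2ereal (expint f g) + 1"
  unfolding LL_def Pm_def ..

lemma Pm_cong: "(\<And>x. x \<in> set xs \<Longrightarrow> g x = h x) \<Longrightarrow> Pm xs g = Pm xs h"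
  unfolding Pm_def by (metis map_cong)

lemma Pm_add: "Pm xs (\<lambda>x. g x + h x) = Pm xs g + Pm xs h"
  unfolding Pm_def by (simp add: sum_list_addf add_divide_distrib)

lemma Pm_cmult: "Pm xs (\<lambda>x. k * g x) = k * Pm xs g"
  unfolding Pm_def by (simp add: sum_list_const_mult)

lemma Pm_const: "xs \<noteq> [] \<Longrightarrow> Pm xs (\<lambda>x. k) = k"
proof -
  have "sum_list (map (\<lambda>x. k) xs) = real (length xs) * k" by (induction xs) (auto simp: algebra_simps)
  then show "xs \<noteq> [] \<Longrightarrow> Pm xs (\<lambda>x. k) = k" unfolding Pm_def by simp
qed

lemma sum_list_sum: "sum_list (map (\<lambda>x. \<Sum>\<sigma>\<in>T. h \<sigma> x) xs) = (\<Sum>\<sigma>\<in>T. sum_list (map (h \<sigma>) xs))"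
  by (induction xs) (auto simp: sum.distrib)

lemma Pm_sum: "Pm xs (\<lambda>x. \<Sum>\<sigma>\<in>T. h \<sigma> x) = (\<Sum>\<sigma>\<in>T. Pm xs (h \<sigma>))"
  unfolding Pm_def by (simp add: sum_list_sum sum_divide_distrib)

lemma LL_cong:
  assumes "\<forall>x\<in>set xs. x \<ge> 0" "\<And>x. x \<ge> 0 \<Longrightarrow> g x = h x"
  shows "LL f xs g = LL f xs h"
proof -
  have "Pm xs g = Pm xs h" using assms by (intro Pm_cong) auto
  moreover have "expint f g = expint f h" using assms by (intro expint_cong) auto
  ultimately show ?thesis by (simp add: LL_Pm)
qed

lemma DL_cong:
  assumes "\<forall>x\<in>set xs. x \<ge> 0" "\<And>x. x \<ge> 0 \<Longrightarrow> g x = h x"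
  shows "DL f xs g v = DL f xs h v"
proof -
  have "\<And>t. LL f xs (\<lambda>x. g x + t * v x) = LL f xs (\<lambda>x. h x + t * v x)"
    using assms by (intro LL_cong) auto
  moreover have "LL f xs g = LL f xs h" using assms by (intro LL_cong) auto
  ultimately show ?thesis unfolding DL_def by simp
qed

lemma seq_exp:
  fixes S :: "nat \<Rightarrow> real" and y :: real
  assumes "S \<longlonglongrightarrow> 0" "\<forall>n. S n \<noteq> 0"
  shows "(\<lambda>n. (exp (S n * y) - 1) / S n) \<longlonglongrightarrow> y"
proof -
  have "DERIV (\<lambda>t. exp (t * y)) 0 :> exp (0 * y) * y" by (auto intro!: derivative_eq_intros)
  then have lim: "((\<lambda>h. (exp (h * y) - 1) / h) \<longlongrightarrow> y) (at 0)" by (simp add: DERIV_def)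
  have "filterlim S (at 0) sequentially" using assms by (simp add: filterlim_at)
  from filterlim_compose[OF lim this] show ?thesis .
qed

lemma r1: "z \<ge> 0 \<Longrightarrow> exp z - 1 \<le> z * exp (z::real)"
proof -
  assume "z \<ge> 0"
  have "1 - z \<le> exp (-z)" using exp_ge_add_one_self[of "-z"] by simp
  then have "(1 - z) * exp z \<le> exp (-z) * exp z" by (intro mult_right_mono) auto
  then show ?thesis by (simp add: exp_minus algebra_simps)
qed

lemma r3:
  fixes t v :: real
  assumes "t > 0" "v \<ge> 0"
  shows "0 \<le> (exp (t * v) - 1) / t" "(exp (t * v) - 1) / t \<le> v * exp (t * v)"
proof -
  show "0 \<le> (exp (t * v) - 1) / t" using assms by simp
  have tv: "t * v \<ge> 0" using assms by simp
  have "exp (t * v) - 1 \<le> (t * v) * exp (t * v)" using r1[OF tv] .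
  then show "(exp (t * v) - 1) / t \<le> v * exp (t * v)" using assms by (simp add: divide_le_eq algebra_simps)
qed

lemma r2:
  fixes t y :: real
  assumes "0 < t" "t \<le> 1"
  shows "\<bar>(exp (- t * y) - 1) / (- t)\<bar> \<le> \<bar>y\<bar> * (1 + exp (- y))"
proof (cases "y \<ge> 0")
  case True
  have "1 - t * y \<le> exp (- t * y)" using exp_ge_add_one_self[of "- t * y"] by simp
  moreover have "exp (- t * y) \<le> 1" using True assms by simp
  ultimately have "\<bar>(exp (- t * y) - 1) / (- t)\<bar> = (1 - exp (- t * y)) / t" "1 - exp (- t * y) \<le> t * y"
    using assms by (auto simp: abs_if divide_simps)
  then have "\<bar>(exp (- t * y) - 1) / (- t)\<bar> \<le> y" using assms by (simp add: divide_le_eq mult.commute)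
  also have "y \<le> \<bar>y\<bar> * (1 + exp (- y))" using True by (simp add: algebra_simps)
  finally show ?thesis .
next
  case False
  define z where "z = - t * y"
  have z: "z > 0" using False assms by (simp add: z_def mult_pos_neg)
  have "exp z - 1 \<le> z * exp z" using r1[of z] z by simp
  then have "\<bar>(exp z - 1) / (- t)\<bar> \<le> (z * exp z) / t" using z assms by (simp add: abs_if divide_simps)
  also have "(z * exp z) / t = \<bar>y\<bar> * exp z" using assms False by (simp add: z_def)
  also have "exp z \<le> exp (- y)" using assms False by (simp add: z_def mult_le_cancel_right1)
  then have "exp z \<le> 1 + exp (- y)" by (smt (verit) exp_gt_zero)
  then have "\<bar>y\<bar> * exp z \<le> \<bar>y\<bar> * (1 + exp (- y))" by (intro mult_left_mono) auto
  finally show ?thesis by (simp add: z_def)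
qed

lemma x_le_sq: "(x::real) \<le> 1 + x\<^sup>2"
proof -
  have "0 \<le> (x - 1/2)\<^sup>2" by simp
  then show ?thesis by (simp add: power2_eq_square algebra_simps)
qed

context dsetup
begin

lemma nn_shift:
  assumes [measurable]: "h \<in> borel_measurable borel"
  shows "expint f (\<lambda>x. th x + h x) = (\<integral>\<^sup>+x. ennreal (exp (h x)) \<partial>N)"
proof -
  have "(\<integral>\<^sup>+x. ennreal (exp (h x)) \<partial>N) = (\<integral>\<^sup>+x. ennreal (dens x) * ennreal (exp (h x)) \<partial>lborel)"
    unfolding N_def by (rule nn_integral_density) auto
  also have "\<dots> = (\<integral>\<^sup>+x. ennreal (exp (th x + h x) * fz f x) \<partial>lborel)"
  proof (intro nn_integral_cong)
    fix x
    have "ennreal (dens x) * ennreal (exp (h x)) = ennreal (dens x * exp (h x))"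
      by (rule ennreal_mult[symmetric]) (simp_all add: dens_nonneg)
    also have "dens x * exp (h x) = exp (th x + h x) * fz f x" by (simp add: dens_def exp_add)
    finally show "ennreal (dens x) * ennreal (exp (h x)) = ennreal (exp (th x + h x) * fz f x)" .
  qed
  finally show ?thesis by (simp add: expint_eq)
qed

lemma int_const: "integrable N (\<lambda>x. k::real)"
  by (rule int_N[where l=0 and \<alpha>="\<bar>k\<bar>"]) (use D_less in \<open>auto simp: ring_distribs\<close>)

lemma nn_one: "(\<integral>\<^sup>+x. ennreal 1 \<partial>N) = 1"
  using nn_shift[of "\<lambda>x. 0"] E1' by simp

lemma integral_one: "integral\<^sup>L N (\<lambda>x. 1::real) = 1"
proof -
  have "integral\<^sup>L N (\<lambda>x. 1::real) = enn2real (\<integral>\<^sup>+x. ennreal 1 \<partial>N)"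
    by (rule integral_eq_nn_integral) auto
  then show ?thesis using nn_one by simp
qed

lemma integral_constN: "integral\<^sup>L N (\<lambda>x. k::real) = k"
  using integral_one by simp

lemma measN: "measure N (space N) = 1"
  using integral_one by simp

lemma E_shift:
  assumes [measurable]: "h \<in> borel_measurable borel" and int: "integrable N (\<lambda>x. exp (h x))"
  shows "expint f (\<lambda>x. th x + h x) = ennreal (integral\<^sup>L N (\<lambda>x. exp (h x)))"
  using nn_shift[of h] nn_integral_eq_integral[OF int] by simp

lemma int_V:
  assumes "\<sigma> \<ge> 0"
  shows "integrable N (Vtau \<sigma>)"
proof (rule int_N[where l=0 and \<alpha>=1])
  show "\<forall>x\<ge>0. \<bar>Vtau \<sigma> x\<bar> \<le> 1 * (1 + x\<^sup>2) * exp (0 * x)"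
  proof (intro allI impI)
    fix x :: real assume x: "x \<ge> 0"
    have "x \<le> 1 + x\<^sup>2" by (rule x_le_sq)
    then show "\<bar>Vtau \<sigma> x\<bar> \<le> 1 * (1 + x\<^sup>2) * exp (0 * x)" using x assms by (simp add: Vtau_def)
  qed
qed (use D_less in auto)

lemma int_rep:
  fixes T' :: "real set"
  assumes "finite T'" "T' \<subseteq> {0..}" "\<forall>\<sigma>\<in>T'. c' \<sigma> \<ge> 0"
  shows "integrable N (\<lambda>x. a' + (\<Sum>\<sigma>\<in>T'. c' \<sigma> * Vtau \<sigma> x))"
proof (rule int_N[where l=0 and \<alpha>="\<bar>a'\<bar> + (\<Sum>\<sigma>\<in>T'. c' \<sigma>)"])
  show "\<forall>x\<ge>0. \<bar>a' + (\<Sum>\<sigma>\<in>T'. c' \<sigma> * Vtau \<sigma> x)\<bar> \<le> (\<bar>a'\<bar> + (\<Sum>\<sigma>\<in>T'. c' \<sigma>)) * (1 + x\<^sup>2) * exp (0 * x)"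
  proof (intro allI impI)
    fix x :: real assume x: "x \<ge> 0"
    note b = rep_bounds[OF assms x, of a']
    have s0: "(\<Sum>\<sigma>\<in>T'. c' \<sigma>) \<ge> 0" using assms by (simp add: sum_nonneg)
    have x2: "x \<le> 1 + x\<^sup>2" by (rule x_le_sq)
    have "\<bar>a' + (\<Sum>\<sigma>\<in>T'. c' \<sigma> * Vtau \<sigma> x)\<bar> \<le> \<bar>a'\<bar> + (\<Sum>\<sigma>\<in>T'. c' \<sigma>) * x"
    proof -
      have "0 \<le> (\<Sum>\<sigma>\<in>T'. c' \<sigma>) * x" using s0 x by simp
      then show ?thesis using b abs_ge_self[of a'] abs_ge_minus_self[of a'] unfolding abs_le_iff by linarith
    qed
    also have "\<dots> \<le> \<bar>a'\<bar> * (1 + x\<^sup>2) + (\<Sum>\<sigma>\<in>T'. c' \<sigma>) * (1 + x\<^sup>2)"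
    proof (rule add_mono)
      show "\<bar>a'\<bar> \<le> \<bar>a'\<bar> * (1 + x\<^sup>2)" using mult_left_mono[of 1 "1 + x\<^sup>2" "\<bar>a'\<bar>"] by simp
      show "(\<Sum>\<sigma>\<in>T'. c' \<sigma>) * x \<le> (\<Sum>\<sigma>\<in>T'. c' \<sigma>) * (1 + x\<^sup>2)" using s0 x2 by (intro mult_left_mono) auto
    qed
    finally show "\<bar>a' + (\<Sum>\<sigma>\<in>T'. c' \<sigma> * Vtau \<sigma> x)\<bar> \<le> (\<bar>a'\<bar> + (\<Sum>\<sigma>\<in>T'. c' \<sigma>)) * (1 + x\<^sup>2) * exp (0 * x)"
      by (simp add: algebra_simps)
  qed
qed (use D_less in auto)

lemma int_th: "integrable N th"
  using int_rep[OF fT T0 cnn, of a] unfolding th_def[abs_def] .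

lemma integral_rep:
  fixes T' :: "real set"
  assumes "finite T'" "T' \<subseteq> {0..}"
  shows "integral\<^sup>L N (\<lambda>x. a' + (\<Sum>\<sigma>\<in>T'. c' \<sigma> * Vtau \<sigma> x)) = a' + (\<Sum>\<sigma>\<in>T'. c' \<sigma> * integral\<^sup>L N (Vtau \<sigma>))"
proof -
  have iV: "\<And>\<sigma>. \<sigma> \<in> T' \<Longrightarrow> integrable N (\<lambda>x. c' \<sigma> * Vtau \<sigma> x)"
    using assms int_V by auto
  have "integral\<^sup>L N (\<lambda>x. a' + (\<Sum>\<sigma>\<in>T'. c' \<sigma> * Vtau \<sigma> x)) = integral\<^sup>L N (\<lambda>x. a') + integral\<^sup>L N (\<lambda>x. \<Sum>\<sigma>\<in>T'. c' \<sigma> * Vtau \<sigma> x)"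
    by (rule Bochner_Integration.integral_add[OF int_const]) (use iV in auto)
  also have "integral\<^sup>L N (\<lambda>x. \<Sum>\<sigma>\<in>T'. c' \<sigma> * Vtau \<sigma> x) = (\<Sum>\<sigma>\<in>T'. integral\<^sup>L N (\<lambda>x. c' \<sigma> * Vtau \<sigma> x))"
    by (rule Bochner_Integration.integral_sum) (use iV in auto)
  finally show ?thesis by (simp add: measN)
qed

end

context dsetup
begin

lemma meas_N: "g \<in> borel_measurable borel \<Longrightarrow> g \<in> borel_measurable N"
  unfolding N_def by simp

lemma LL_th: "LL f xs th = ereal (Pm xs th)"
proof -
  have e: "enn2ereal 1 = 1" by (metis enn2ereal_ennreal ennreal_1 one_ereal_def zero_le_one)
  show ?thesis using E1' by (simp add: LL_Pm e one_ereal_def)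
qed

lemma DL_V:
  assumes \<sigma>: "\<sigma> \<ge> 0"
  shows "DL f xs th (Vtau \<sigma>) = ereal (Pm xs (Vtau \<sigma>) - integral\<^sup>L N (Vtau \<sigma>))"
proof -
  define t1 where "t1 = min 1 ((\<beta> - D)/2)"
  have "min 1 ((\<beta> - D)/2) \<le> (\<beta> - D)/2" by (rule min.cobounded2)
  then have t1: "0 < t1" "t1 \<le> 1" "D + t1 < \<beta>" using D_less unfolding t1_def by auto
  define q where "q t x = (exp (t * Vtau \<sigma> x) - 1) / t" for t x
  have qm[measurable]: "q t \<in> borel_measurable borel" for t unfolding q_def by measurable
  have V0: "Vtau \<sigma> x \<ge> 0" for x by (simp add: Vtau_def)
  have V1: "x \<ge> 0 \<Longrightarrow> Vtau \<sigma> x \<le> x" for x using \<sigma> by (simp add: Vtau_def)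
  have intE: "integrable N (\<lambda>x. exp (t * Vtau \<sigma> x))" if t: "t \<in> {0<..t1}" for t
  proof (rule int_N[where l=t1 and \<alpha>=1])
    show "\<forall>x\<ge>0. \<bar>exp (t * Vtau \<sigma> x)\<bar> \<le> 1 * (1 + x\<^sup>2) * exp (t1 * x)"
    proof (intro allI impI)
      fix x :: real assume x: "x \<ge> 0"
      have "t * Vtau \<sigma> x \<le> t1 * x" using t V0[of x] V1[OF x] by (intro mult_mono) auto
      then have "exp (t * Vtau \<sigma> x) \<le> exp (t1 * x)" by simp
      also have "\<dots> \<le> (1 + x\<^sup>2) * exp (t1 * x)" using mult_right_mono[of 1 "1 + x\<^sup>2" "exp (t1 * x)"] by simp
      finally show "\<bar>exp (t * Vtau \<sigma> x)\<bar> \<le> 1 * (1 + x\<^sup>2) * exp (t1 * x)" by simp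
    qed
  qed (use t1 in auto)
  have LLt: "LL f xs (\<lambda>x. th x + t * Vtau \<sigma> x)
      = ereal (Pm xs th + t * Pm xs (Vtau \<sigma>) - integral\<^sup>L N (\<lambda>x. exp (t * Vtau \<sigma> x)) + 1)"
    if t: "t \<in> {0<..t1}" for t
  proof -
    have "expint f (\<lambda>x. th x + t * Vtau \<sigma> x) = ennreal (integral\<^sup>L N (\<lambda>x. exp (t * Vtau \<sigma> x)))"
      by (rule E_shift) (use intE[OF t] in auto)
    moreover have "integral\<^sup>L N (\<lambda>x. exp (t * Vtau \<sigma> x)) \<ge> 0" by (rule integral_nonneg_AE) auto
    ultimately show ?thesis by (simp add: LL_Pm Pm_add Pm_cmult)
  qed
  have intq: "integral\<^sup>L N (q t) = (integral\<^sup>L N (\<lambda>x. exp (t * Vtau \<sigma> x)) - 1) / t"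
    if t: "t \<in> {0<..t1}" for t
  proof -
    have "integral\<^sup>L N (q t) = integral\<^sup>L N (\<lambda>x. exp (t * Vtau \<sigma> x) - 1) / t"
      unfolding q_def by simp
    also have "integral\<^sup>L N (\<lambda>x. exp (t * Vtau \<sigma> x) - 1) = integral\<^sup>L N (\<lambda>x. exp (t * Vtau \<sigma> x)) - 1"
      using Bochner_Integration.integral_diff[OF intE[OF t] int_const[of 1]] integral_one by simp
    finally show ?thesis .
  qed
  have quot: "(LL f xs (\<lambda>x. th x + t * Vtau \<sigma> x) - LL f xs th) / ereal t
      = ereal (Pm xs (Vtau \<sigma>) - integral\<^sup>L N (q t))" if t: "t \<in> {0<..t1}" for t
  proof -
    have "(Pm xs th + t * Pm xs (Vtau \<sigma>) - integral\<^sup>L N (\<lambda>x. exp (t * Vtau \<sigma> x)) + 1 - Pm xs th) / t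
        = Pm xs (Vtau \<sigma>) - integral\<^sup>L N (q t)"
      using t by (simp add: intq[OF t] field_simps)
    then show ?thesis using t by (simp add: LLt[OF t] LL_th)
  qed
  have lim: "((\<lambda>t. integral\<^sup>L N (q t)) \<longlongrightarrow> integral\<^sup>L N (Vtau \<sigma>)) (at_right 0)"
  proof (rule tendsto_at_right_sequentially[OF t1(1)])
    fix S :: "nat \<Rightarrow> real"
    assume S: "\<And>n. 0 < S n" "\<And>n. S n < t1" "decseq S" "S \<longlonglongrightarrow> 0"
    show "(\<lambda>n. integral\<^sup>L N (q (S n))) \<longlonglongrightarrow> integral\<^sup>L N (Vtau \<sigma>)"
    proof (rule integral_dominated_convergence[where w="\<lambda>x. Vtau \<sigma> x * exp (t1 * Vtau \<sigma> x)"])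
      show "integrable N (\<lambda>x. Vtau \<sigma> x * exp (t1 * Vtau \<sigma> x))"
      proof (rule int_N[where l=t1 and \<alpha>=1])
        show "\<forall>x\<ge>0. \<bar>Vtau \<sigma> x * exp (t1 * Vtau \<sigma> x)\<bar> \<le> 1 * (1 + x\<^sup>2) * exp (t1 * x)"
        proof (intro allI impI)
          fix x :: real assume x: "x \<ge> 0"
          have "exp (t1 * Vtau \<sigma> x) \<le> exp (t1 * x)" using t1 V1[OF x] by (simp add: mult_left_mono)
          then have "Vtau \<sigma> x * exp (t1 * Vtau \<sigma> x) \<le> (1 + x\<^sup>2) * exp (t1 * x)"
            using V0[of x] V1[OF x] x_le_sq[of x] by (intro mult_mono) auto
          then show "\<bar>Vtau \<sigma> x * exp (t1 * Vtau \<sigma> x)\<bar> \<le> 1 * (1 + x\<^sup>2) * exp (t1 * x)"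
            using V0[of x] by simp
        qed
      qed (use t1 in auto)
      show "AE x in N. (\<lambda>n. q (S n) x) \<longlonglongrightarrow> Vtau \<sigma> x"
        unfolding q_def using seq_exp[OF S(4)] S(1) by (intro AE_I2) (metis less_irrefl)
      show "AE x in N. norm (q (S n) x) \<le> Vtau \<sigma> x * exp (t1 * Vtau \<sigma> x)" for n
      proof (intro AE_I2)
        fix x
        have "0 \<le> q (S n) x" "q (S n) x \<le> Vtau \<sigma> x * exp (S n * Vtau \<sigma> x)"
          using r3[OF S(1) V0, of n x] unfolding q_def by auto
        moreover have "exp (S n * Vtau \<sigma> x) \<le> exp (t1 * Vtau \<sigma> x)"
          using S(2)[of n] V0[of x] by (simp add: mult_right_mono)
        then have "Vtau \<sigma> x * exp (S n * Vtau \<sigma> x) \<le> Vtau \<sigma> x * exp (t1 * Vtau \<sigma> x)"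
          using V0[of x] by (intro mult_left_mono) auto
        ultimately show "norm (q (S n) x) \<le> Vtau \<sigma> x * exp (t1 * Vtau \<sigma> x)" by simp
      qed
    qed (auto intro: meas_N)
  qed
  have "((\<lambda>t. ereal (Pm xs (Vtau \<sigma>) - integral\<^sup>L N (q t))) \<longlongrightarrow> ereal (Pm xs (Vtau \<sigma>) - integral\<^sup>L N (Vtau \<sigma>))) (at_right 0)"
    by (intro tendsto_ereal tendsto_diff tendsto_const lim)
  moreover have "\<forall>\<^sub>F t in at_right 0. ereal (Pm xs (Vtau \<sigma>) - integral\<^sup>L N (q t))
      = (LL f xs (\<lambda>x. th x + t * Vtau \<sigma> x) - LL f xs th) / ereal t"
    using eventually_at_right_real[OF t1(1)] by eventually_elim (simp add: quot)
  ultimately have "((\<lambda>t. (LL f xs (\<lambda>x. th x + t * Vtau \<sigma> x) - LL f xs th) / ereal t)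
      \<longlongrightarrow> ereal (Pm xs (Vtau \<sigma>) - integral\<^sup>L N (Vtau \<sigma>))) (at_right 0)"
    using tendsto_cong by fastforce
  then show ?thesis unfolding DL_def by (intro tendsto_Lim) auto
qed

end

context dsetup
begin

lemma opt_th:
  assumes xs: "xs \<noteq> []"
    and hyp: "\<And>s. 0 < s \<Longrightarrow> s < 1 \<Longrightarrow> LL f xs (\<lambda>x. s * th x) \<le> LL f xs th"
  shows "integral\<^sup>L N th \<le> Pm xs th"
proof -
  define q where "q t x = (exp (t * th x) - 1) / t" for t x
  have qm[measurable]: "q t \<in> borel_measurable borel" for t unfolding q_def by measurable
  have key: "integral\<^sup>L N (q (-t)) \<le> Pm xs th" if t: "0 < t" "t < 1" for t
  proof -
    have intJ: "integrable N (\<lambda>x. exp ((-t) * th x))"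
    proof (rule int_N[where l=0 and \<alpha>="exp \<bar>a\<bar>"])
      show "\<forall>x\<ge>0. \<bar>exp ((-t) * th x)\<bar> \<le> exp \<bar>a\<bar> * (1 + x\<^sup>2) * exp (0 * x)"
      proof (intro allI impI)
        fix x :: real assume x: "x \<ge> 0"
        have "t * a \<le> t * th x" using th_bounds(1)[OF x] t by (intro mult_left_mono) auto
        moreover have "- (t * a) \<le> \<bar>a\<bar>"
        proof -
          have "\<bar>t * a\<bar> \<le> \<bar>a\<bar>" using t by (simp add: abs_mult mult_left_le_one_le)
          then show ?thesis by linarith
        qed
        ultimately have "(-t) * th x \<le> \<bar>a\<bar>" by simp
        then have "exp ((-t) * th x) \<le> exp \<bar>a\<bar>" by simp
        also have "\<dots> \<le> exp \<bar>a\<bar> * (1 + x\<^sup>2)" using mult_left_mono[of 1 "1 + x\<^sup>2" "exp \<bar>a\<bar>"] by simp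
        finally show "\<bar>exp ((-t) * th x)\<bar> \<le> exp \<bar>a\<bar> * (1 + x\<^sup>2) * exp (0 * x)" by simp
      qed
    qed (use D_less in auto)
    define J where "J = integral\<^sup>L N (\<lambda>x. exp ((-t) * th x))"
    have J0: "J \<ge> 0" unfolding J_def by (rule integral_nonneg_AE) auto
    have "(\<lambda>x. (1 - t) * th x) = (\<lambda>x. th x + (-t) * th x)" by (simp add: algebra_simps)
    then have "expint f (\<lambda>x. (1 - t) * th x) = ennreal J"
      unfolding J_def using E_shift[of "\<lambda>x. (-t) * th x"] intJ by simp
    then have "LL f xs (\<lambda>x. (1 - t) * th x) = ereal ((1 - t) * Pm xs th - J + 1)"
      using J0 by (simp add: LL_Pm Pm_cmult)
    then have "ereal ((1 - t) * Pm xs th - J + 1) \<le> ereal (Pm xs th)"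
      using hyp[of "1 - t"] t LL_th by simp
    then have ineq: "1 - J \<le> t * Pm xs th" by (simp add: algebra_simps)
    have "integral\<^sup>L N (q (-t)) = integral\<^sup>L N (\<lambda>x. exp ((-t) * th x) - 1) / (-t)"
      unfolding q_def by simp
    also have "integral\<^sup>L N (\<lambda>x. exp ((-t) * th x) - 1) = J - 1"
      unfolding J_def using Bochner_Integration.integral_diff[OF intJ int_const[of 1]] integral_one by simp
    finally have "integral\<^sup>L N (q (-t)) = (1 - J) / t" using t by (simp add: divide_simps)
    also have "\<dots> \<le> Pm xs th" using ineq t by (simp add: divide_le_eq mult.commute)
    finally show ?thesis .
  qed
  define S where "S n = - inverse (real (Suc (Suc n)))" for n
  have S0: "S \<longlonglongrightarrow> 0"
    unfolding S_def using tendsto_minus[OF LIMSEQ_Suc[OF LIMSEQ_inverse_real_of_nat]] by simp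
  have Sne: "\<forall>n. S n \<noteq> 0" by (simp add: S_def)
  have Sr: "0 < - S n" "- S n < 1" for n by (auto simp: S_def field_simps)
  have "(\<lambda>n. integral\<^sup>L N (q (S n))) \<longlonglongrightarrow> integral\<^sup>L N th"
  proof (rule integral_dominated_convergence[where w="\<lambda>x. \<bar>th x\<bar> * (1 + exp (- th x))"])
    show "integrable N (\<lambda>x. \<bar>th x\<bar> * (1 + exp (- th x)))"
    proof (rule int_N[where l=0 and \<alpha>="(\<bar>a\<bar> + D) * (1 + exp (- a))"])
      show "\<forall>x\<ge>0. \<bar>\<bar>th x\<bar> * (1 + exp (- th x))\<bar> \<le> (\<bar>a\<bar> + D) * (1 + exp (- a)) * (1 + x\<^sup>2) * exp (0 * x)"
      proof (intro allI impI)
        fix x :: real assume x: "x \<ge> 0"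
        have Dx: "0 \<le> D * x" using D_nonneg x by simp
        have "\<bar>th x\<bar> \<le> \<bar>a\<bar> + D * x" using th_bounds(1,2)[OF x] Dx by linarith
        also have "\<dots> \<le> (\<bar>a\<bar> + D) * (1 + x\<^sup>2)"
        proof -
          have "\<bar>a\<bar> \<le> \<bar>a\<bar> * (1 + x\<^sup>2)" using mult_left_mono[of 1 "1 + x\<^sup>2" "\<bar>a\<bar>"] by simp
          moreover have "D * x \<le> D * (1 + x\<^sup>2)" using D_nonneg x_le_sq[of x] by (intro mult_left_mono) auto
          ultimately have "\<bar>a\<bar> + D * x \<le> \<bar>a\<bar> * (1 + x\<^sup>2) + D * (1 + x\<^sup>2)" by (rule add_mono)
          then show ?thesis by (simp add: distrib_right)
        qed
        finally have b1: "\<bar>th x\<bar> \<le> (\<bar>a\<bar> + D) * (1 + x\<^sup>2)" .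
        have b2: "1 + exp (- th x) \<le> 1 + exp (- a)" using th_bounds(1)[OF x] by simp
        have "\<bar>th x\<bar> * (1 + exp (- th x)) \<le> (\<bar>a\<bar> + D) * (1 + x\<^sup>2) * (1 + exp (- a))"
          using b1 b2 by (intro mult_mono) auto
        then show "\<bar>\<bar>th x\<bar> * (1 + exp (- th x))\<bar> \<le> (\<bar>a\<bar> + D) * (1 + exp (- a)) * (1 + x\<^sup>2) * exp (0 * x)"
          by (simp add: algebra_simps)
      qed
    qed (use D_less in auto)
    show "AE x in N. (\<lambda>n. q (S n) x) \<longlonglongrightarrow> th x"
      unfolding q_def using seq_exp[OF S0 Sne] by (intro AE_I2) auto
    show "AE x in N. norm (q (S n) x) \<le> \<bar>th x\<bar> * (1 + exp (- th x))" for n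
    proof (intro AE_I2)
      fix x
      have "\<bar>(exp (- (- S n) * th x) - 1) / (- (- S n))\<bar> \<le> \<bar>th x\<bar> * (1 + exp (- th x))"
        using r2[OF Sr(1) less_imp_le[OF Sr(2)]] by blast
      then show "norm (q (S n) x) \<le> \<bar>th x\<bar> * (1 + exp (- th x))" unfolding q_def by simp
    qed
  qed (auto intro: meas_N)
  moreover have "\<forall>n. integral\<^sup>L N (q (S n)) \<le> Pm xs th"
    using key[OF Sr] by simp
  ultimately show ?thesis by (intro LIMSEQ_le_const2) auto
qed

lemma cmp_rep:
  fixes T' :: "real set"
  assumes T': "finite T'" "T' \<subseteq> {0..}" "\<forall>\<sigma>\<in>T'. c' \<sigma> \<ge> 0"
    and E: "expint f (\<lambda>x. a' + (\<Sum>\<sigma>\<in>T'. c' \<sigma> * Vtau \<sigma> x)) = 1"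
  shows "integral\<^sup>L N (\<lambda>x. a' + (\<Sum>\<sigma>\<in>T'. c' \<sigma> * Vtau \<sigma> x)) \<le> integral\<^sup>L N th"
proof -
  define g where "g x = a' + (\<Sum>\<sigma>\<in>T'. c' \<sigma> * Vtau \<sigma> x)" for x
  have gm[measurable]: "g \<in> borel_measurable borel" unfolding g_def by measurable
  have ig: "integrable N g" using int_rep[OF T'] unfolding g_def[abs_def] .
  have "(\<lambda>x. th x + (g x - th x)) = g" by auto
  then have nn: "(\<integral>\<^sup>+x. ennreal (exp (g x - th x)) \<partial>N) = 1"
    using nn_shift[of "\<lambda>x. g x - th x"] E unfolding g_def[abs_def] by simp
  have ie: "integrable N (\<lambda>x. exp (g x - th x))"
    by (rule integrableI_nonneg) (use nn in \<open>auto intro: meas_N\<close>)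
  have i1: "integral\<^sup>L N (\<lambda>x. exp (g x - th x)) = 1"
  proof -
    have "integral\<^sup>L N (\<lambda>x. exp (g x - th x)) = enn2real (\<integral>\<^sup>+x. ennreal (exp (g x - th x)) \<partial>N)"
      by (rule integral_eq_nn_integral) (auto intro: meas_N)
    then show ?thesis using nn by simp
  qed
  have idf: "integrable N (\<lambda>x. g x - th x)" using ig int_th by auto
  have "integral\<^sup>L N (\<lambda>x. 1 + (g x - th x)) \<le> integral\<^sup>L N (\<lambda>x. exp (g x - th x))"
    by (rule Bochner_Integration.integral_mono) (use int_const[of 1] idf ie in auto)
  moreover have "integral\<^sup>L N (\<lambda>x. 1 + (g x - th x)) = 1 + (integral\<^sup>L N g - integral\<^sup>L N th)"
    using Bochner_Integration.integral_add[OF int_const[of 1] idf] Bochner_Integration.integral_diff[OF ig int_th]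
      integral_one by simp
  ultimately have "integral\<^sup>L N g \<le> integral\<^sup>L N th" using i1 by simp
  then show ?thesis unfolding g_def[abs_def] .
qed

end

lemma scaled_quot:
  "(\<lambda>x. (s * v x - s * v \<tau>) / (x - \<tau>)) = (\<lambda>x. s * ((v x - v \<tau>) / (x - \<tau>::real)))"
proof (rule ext)
  fix x
  have "s * v x - s * v \<tau> = s * (v x - v \<tau>)" by (simp add: right_diff_distrib)
  then show "(s * v x - s * v \<tau>) / (x - \<tau>) = s * ((v x - v \<tau>) / (x - \<tau>))" by simp
qed

lemma scale_ok:
  assumes h: "v \<in> Theta \<inter> PL_on (breakpoints v)" and s: "0 < s"
  shows "(\<lambda>x. s * v x) \<in> Theta \<inter> PL_on (breakpoints v)"
proof -
  have vPL: "v \<in> PL" using h unfolding PL_on_def by auto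
  obtain T a c where rep: "finite T" "T \<subseteq> {0..}" "\<forall>x\<ge>0. v x = a + (\<Sum>\<sigma>\<in>T. c \<sigma> * Vtau \<sigma> x)"
    using rep_PL[OF vPL] by blast
  have "convex_on {0..} v" "mono_on {0..} v" using h unfolding Theta_def by auto
  then have th: "(\<lambda>x. s * v x) \<in> Theta"
    unfolding Theta_def using s by (auto intro!: convex_on_cmul simp: mono_on_def mult_left_mono)
  obtain S where S: "continuous_on {0..} v" "finite S" "\<forall>a b. 0 \<le> a \<and> a < b \<and> {a<..<b} \<inter> S = {} \<longrightarrow> (\<exists>c d. \<forall>x\<in>{a..b}. v x = c * x + d)"
    using vPL unfolding PL_def by blast
  have pl: "(\<lambda>x. s * v x) \<in> PL"
    unfolding PL_def
  proof (intro CollectI conjI exI[of _ S])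
    show "continuous_on {0..} (\<lambda>x. s * v x)" using S(1) by (intro continuous_intros)
    show "finite S" by fact
    show "\<forall>a b. 0 \<le> a \<and> a < b \<and> {a<..<b} \<inter> S = {} \<longrightarrow> (\<exists>c d. \<forall>x\<in>{a..b}. s * v x = c * x + d)"
    proof (intro allI impI)
      fix a b :: real assume "0 \<le> a \<and> a < b \<and> {a<..<b} \<inter> S = {}"
      then obtain c d where "\<forall>x\<in>{a..b}. v x = c * x + d" using S(3) by blast
      then have "\<forall>x\<in>{a..b}. s * v x = (s * c) * x + s * d" by (simp add: algebra_simps)
      then show "\<exists>c d. \<forall>x\<in>{a..b}. s * v x = c * x + d" by blast
    qed
  qed
  have rd: "rderiv (\<lambda>x. s * v x) \<tau> = s * rderiv v \<tau>" if "\<tau> \<ge> 0" for \<tau>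
  proof -
    note q = quot_right[OF rep that]
    have q2: "((\<lambda>x. (s * v x - s * v \<tau>) / (x - \<tau>)) \<longlongrightarrow> s * (\<Sum>\<sigma>\<in>T. if \<sigma> \<le> \<tau> then c \<sigma> else 0)) (at_right \<tau>)"
      unfolding scaled_quot by (rule tendsto_mult_left[OF q])
    have "rderiv v \<tau> = (\<Sum>\<sigma>\<in>T. if \<sigma> \<le> \<tau> then c \<sigma> else 0)"
      unfolding rderiv_def by (rule tendsto_Lim[OF _ q]) simp
    moreover have "rderiv (\<lambda>x. s * v x) \<tau> = s * (\<Sum>\<sigma>\<in>T. if \<sigma> \<le> \<tau> then c \<sigma> else 0)"
      unfolding rderiv_def by (rule tendsto_Lim[OF _ q2]) simp
    ultimately show ?thesis by simp
  qed
  have ld: "lderiv (\<lambda>x. s * v x) \<tau> = s * lderiv v \<tau>" if "\<tau> \<ge> 0" for \<tau>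
  proof (cases "\<tau> = 0")
    case True then show ?thesis by (simp add: lderiv_def)
  next
    case False
    then have tp: "\<tau> > 0" using that by simp
    note q = quot_left[OF rep tp]
    have q2: "((\<lambda>x. (s * v x - s * v \<tau>) / (x - \<tau>)) \<longlongrightarrow> s * (\<Sum>\<sigma>\<in>T. if \<sigma> < \<tau> then c \<sigma> else 0)) (at_left \<tau>)"
      unfolding scaled_quot by (rule tendsto_mult_left[OF q])
    have "lderiv v \<tau> = (\<Sum>\<sigma>\<in>T. if \<sigma> < \<tau> then c \<sigma> else 0)"
      unfolding lderiv_def using False by (simp add: tendsto_Lim[OF _ q])
    moreover have "lderiv (\<lambda>x. s * v x) \<tau> = s * (\<Sum>\<sigma>\<in>T. if \<sigma> < \<tau> then c \<sigma> else 0)"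
      unfolding lderiv_def using False tendsto_Lim[OF _ q2] by simp
    ultimately show ?thesis by simp
  qed
  have "breakpoints (\<lambda>x. s * v x) \<subseteq> breakpoints v"
  proof
    fix \<tau> assume "\<tau> \<in> breakpoints (\<lambda>x. s * v x)"
    then have t: "\<tau> \<ge> 0" "lderiv (\<lambda>x. s * v x) \<tau> \<noteq> rderiv (\<lambda>x. s * v x) \<tau>" unfolding breakpoints_def by auto
    then have "lderiv v \<tau> \<noteq> rderiv v \<tau>" using rd[OF t(1)] ld[OF t(1)] by auto
    then show "\<tau> \<in> breakpoints v" using t unfolding breakpoints_def by auto
  qed
  moreover have "breakpoints v \<subseteq> breakpoints v" ..
  ultimately show ?thesis using th pl h unfolding PL_on_def by auto
qed

lemma sorted_le_last: "sorted xs \<Longrightarrow> x \<in> set xs \<Longrightarrow> x \<le> last xs"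
proof (induction xs)
  case Nil then show ?case by simp
next
  case (Cons y ys)
  show ?case
  proof (cases "ys = []")
    case True then show ?thesis using Cons.prems by simp
  next
    case False
    have l: "last (y # ys) = last ys" using False by simp
    have s: "sorted ys" "\<forall>z\<in>set ys. y \<le> z" using Cons.prems(1) by auto
    have m: "last ys \<in> set ys" using False by simp
    show ?thesis
    proof (cases "x = y")
      case True then show ?thesis using l s m by simp
    next
      case False
      then have "x \<in> set ys" using Cons.prems(2) by simp
      then show ?thesis using Cons.IH[OF s(1)] l by simp
    qed
  qed
qed

theorem mainTheorem3:
  fixes f :: "real \<Rightarrow> real" and \<beta> :: real and xs :: "real list"
    and \<theta> \<theta>h :: "real \<Rightarrow> real" and \<epsilon> :: real
  assumes A: "standing_assms f \<beta>"
    and data: "xs \<noteq> []" "sorted xs" "\<forall>x\<in>set xs. x \<ge> 0"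
    and hat_max: "\<theta>h \<in> Theta" "\<forall>\<eta>\<in>Theta. LL f xs \<eta> \<le> LL f xs \<theta>h"
    and hat_known: "\<theta>h \<in> Theta1 f" "\<theta>h \<in> PL"
      "breakpoints \<theta>h \<subseteq> ({0} \<union> {hd xs..last xs}) - set xs"
    and eps: "\<epsilon> > 0"
    and th: "\<theta> \<in> Theta1 f" "\<theta> \<in> PL"
    and locopt: "\<theta> \<in> Theta \<inter> PL_on (breakpoints \<theta>)"
      "\<forall>v\<in>Theta \<inter> PL_on (breakpoints \<theta>). LL f xs v \<le> LL f xs \<theta>"
    and DLbound: "(SUP \<tau>\<in>{0..}. DL f xs \<theta> (Vtau \<tau>)) < ereal \<epsilon>"
  shows "LL f xs \<theta>h - LL f xs \<theta> \<le> ereal (rderiv \<theta>h (last xs) * \<epsilon>)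
         \<and> rderiv \<theta>h (last xs) * \<epsilon> < \<beta> * \<epsilon>"
proof -
  define xn where "xn = last xs"
  have xn0: "xn \<ge> 0" using data(1,3) last_in_set unfolding xn_def by blast
  have xle: "\<forall>x\<in>set xs. x \<le> xn" using sorted_le_last[OF data(2)] unfolding xn_def by blast
  obtain T a c where repP: "finite T" "T \<subseteq> {0..}" "\<forall>x\<ge>0. \<theta> x = a + (\<Sum>\<sigma>\<in>T. c \<sigma> * Vtau \<sigma> x)"
    using rep_PL[OF th(2)] by blast
  have cvP: "convex_on {0..} \<theta>" "mono_on {0..} \<theta>" using locopt(1) unfolding Theta_def by auto
  have cP: "\<forall>\<sigma>\<in>T. c \<sigma> \<ge> 0" using coef_nonneg[OF repP cvP] by blast
  have EP: "expint f (\<lambda>x. a + (\<Sum>\<sigma>\<in>T. c \<sigma> * Vtau \<sigma> x)) = 1"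
  proof -
    have "expint f \<theta> = expint f (\<lambda>x. a + (\<Sum>\<sigma>\<in>T. c \<sigma> * Vtau \<sigma> x))"
      by (rule expint_cong) (use repP(3) in blast)
    moreover have "expint f \<theta> = 1" using th(1) unfolding Theta1_def by blast
    ultimately show ?thesis by simp
  qed
  interpret P: dsetup f \<beta> T a c by unfold_locales (use A repP cP EP in auto)
  obtain T2 a2 c2 where repQ: "finite T2" "T2 \<subseteq> {0..}" "\<forall>x\<ge>0. \<theta>h x = a2 + (\<Sum>\<sigma>\<in>T2. c2 \<sigma> * Vtau \<sigma> x)"
    using rep_PL[OF hat_known(2)] by blast
  have cvQ: "convex_on {0..} \<theta>h" "mono_on {0..} \<theta>h" using hat_max(1) unfolding Theta_def by auto
  have cQ: "\<forall>\<sigma>\<in>T2. c2 \<sigma> \<ge> 0" using coef_nonneg[OF repQ cvQ] by blast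
  have EQ: "expint f (\<lambda>x. a2 + (\<Sum>\<sigma>\<in>T2. c2 \<sigma> * Vtau \<sigma> x)) = 1"
  proof -
    have "expint f \<theta>h = expint f (\<lambda>x. a2 + (\<Sum>\<sigma>\<in>T2. c2 \<sigma> * Vtau \<sigma> x))"
      by (rule expint_cong) (use repQ(3) in blast)
    moreover have "expint f \<theta>h = 1" using hat_known(1) unfolding Theta1_def by blast
    ultimately show ?thesis by simp
  qed
  interpret Q: dsetup f \<beta> T2 a2 c2 by unfold_locales (use A repQ cQ EQ in auto)
  have eqP: "\<And>x. x \<ge> 0 \<Longrightarrow> \<theta> x = P.th x" using repP(3) by (simp add: P.th_def)
  have eqQ: "\<And>x. x \<ge> 0 \<Longrightarrow> \<theta>h x = Q.th x" using repQ(3) by (simp add: Q.th_def)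
  have LLP: "LL f xs \<theta> = ereal (Pm xs \<theta>)"
  proof -
    have "LL f xs \<theta> = LL f xs P.th" by (rule LL_cong[OF data(3)]) (rule eqP)
    moreover have "Pm xs P.th = Pm xs \<theta>" by (rule Pm_cong) (use eqP data(3) in force)
    ultimately show ?thesis using P.LL_th by simp
  qed
  have LLQ: "LL f xs \<theta>h = ereal (Pm xs \<theta>h)"
  proof -
    have "LL f xs \<theta>h = LL f xs Q.th" by (rule LL_cong[OF data(3)]) (rule eqQ)
    moreover have "Pm xs Q.th = Pm xs \<theta>h" by (rule Pm_cong) (use eqQ data(3) in force)
    ultimately show ?thesis using Q.LL_th by simp
  qed
  have PmP: "Pm xs \<theta> = Pm xs P.th" using eqP data(3) by (intro Pm_cong) auto
  have PmQ: "Pm xs \<theta>h = a2 + (\<Sum>\<sigma>\<in>T2. c2 \<sigma> * Pm xs (Vtau \<sigma>))"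
  proof -
    have "Pm xs \<theta>h = Pm xs (\<lambda>x. a2 + (\<Sum>\<sigma>\<in>T2. c2 \<sigma> * Vtau \<sigma> x))" using eqQ data(3) by (intro Pm_cong) (auto simp: Q.th_def)
    also have "\<dots> = a2 + (\<Sum>\<sigma>\<in>T2. c2 \<sigma> * Pm xs (Vtau \<sigma>))"
      using data(1) by (simp add: Pm_add Pm_const Pm_sum Pm_cmult)
    finally show ?thesis .
  qed
  have optc: "integral\<^sup>L P.N P.th \<le> Pm xs P.th"
  proof (rule P.opt_th[OF data(1)])
    fix s :: real assume s: "0 < s" "s < 1"
    have "LL f xs (\<lambda>x. s * \<theta> x) \<le> LL f xs \<theta>"
      using locopt(2) scale_ok[OF locopt(1) s(1)] by blast
    moreover have "LL f xs (\<lambda>x. s * \<theta> x) = LL f xs (\<lambda>x. s * P.th x)" using eqP by (intro LL_cong[OF data(3)]) auto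
    moreover have "LL f xs \<theta> = LL f xs P.th" using eqP by (intro LL_cong[OF data(3)]) auto
    ultimately show "LL f xs (\<lambda>x. s * P.th x) \<le> LL f xs P.th" by simp
  qed
  \<comment> \<open>(b) comparison via convexity of exp\<close>
  have cmpb: "integral\<^sup>L P.N (\<lambda>x. a2 + (\<Sum>\<sigma>\<in>T2. c2 \<sigma> * Vtau \<sigma> x)) \<le> integral\<^sup>L P.N P.th"
    by (rule P.cmp_rep[OF repQ(1,2) cQ EQ])
  have intQ: "integral\<^sup>L P.N (\<lambda>x. a2 + (\<Sum>\<sigma>\<in>T2. c2 \<sigma> * Vtau \<sigma> x)) = a2 + (\<Sum>\<sigma>\<in>T2. c2 \<sigma> * integral\<^sup>L P.N (Vtau \<sigma>))"
    by (rule P.integral_rep[OF repQ(1,2)])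
  define G where "G \<sigma> = Pm xs (Vtau \<sigma>) - integral\<^sup>L P.N (Vtau \<sigma>)" for \<sigma>
  have Gterm: "c2 \<sigma> * G \<sigma> \<le> (if \<sigma> \<le> xn then c2 \<sigma> else 0) * \<epsilon>" if s: "\<sigma> \<in> T2" for \<sigma>
  proof (cases "\<sigma> \<le> xn")
    case True
    have s0: "\<sigma> \<ge> 0" using s repQ(2) by auto
    have "DL f xs \<theta> (Vtau \<sigma>) = DL f xs P.th (Vtau \<sigma>)" using eqP by (intro DL_cong[OF data(3)]) auto
    also have "\<dots> = ereal (G \<sigma>)" unfolding G_def by (rule P.DL_V[OF s0])
    finally have eqG: "DL f xs \<theta> (Vtau \<sigma>) = ereal (G \<sigma>)" .
    have "DL f xs \<theta> (Vtau \<sigma>) \<le> (SUP \<tau>\<in>{0..}. DL f xs \<theta> (Vtau \<tau>))"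
      by (rule SUP_upper) (use s0 in simp)
    then have "ereal (G \<sigma>) \<le> (SUP \<tau>\<in>{0..}. DL f xs \<theta> (Vtau \<tau>))" using eqG by simp
    then have "ereal (G \<sigma>) < ereal \<epsilon>" using DLbound by (rule order.strict_trans1)
    then have "G \<sigma> < \<epsilon>" by simp
    then have "c2 \<sigma> * G \<sigma> \<le> c2 \<sigma> * \<epsilon>" using cQ s by (intro mult_left_mono) auto
    then show ?thesis using True by simp
  next
    case False
    have "Pm xs (Vtau \<sigma>) = Pm xs (\<lambda>x. 0)"
      using xle False by (intro Pm_cong) (auto simp: Vtau_def)
    also have "\<dots> = 0" using Pm_const[OF data(1)] by simp
    finally have "Pm xs (Vtau \<sigma>) = 0" .
    moreover have "integral\<^sup>L P.N (Vtau \<sigma>) \<ge> 0" by (rule integral_nonneg_AE) (simp add: Vtau_nonneg)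
    ultimately have "G \<sigma> \<le> 0" unfolding G_def by simp
    then have "c2 \<sigma> * G \<sigma> \<le> 0" using cQ s by (simp add: mult_nonneg_nonpos)
    then show ?thesis using False by simp
  qed
  define r where "r = (\<Sum>\<sigma>\<in>T2. if \<sigma> \<le> xn then c2 \<sigma> else 0)"
  have rd: "rderiv \<theta>h (last xs) = r"
    unfolding rderiv_def r_def xn_def[symmetric] by (rule tendsto_Lim[OF _ quot_right[OF repQ xn0]]) simp
  have "Pm xs \<theta>h - integral\<^sup>L P.N (\<lambda>x. a2 + (\<Sum>\<sigma>\<in>T2. c2 \<sigma> * Vtau \<sigma> x)) = (\<Sum>\<sigma>\<in>T2. c2 \<sigma> * G \<sigma>)"
    unfolding PmQ intQ G_def by (simp add: sum_subtractf right_diff_distrib)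
  also have "\<dots> \<le> (\<Sum>\<sigma>\<in>T2. (if \<sigma> \<le> xn then c2 \<sigma> else 0) * \<epsilon>)" by (rule sum_mono) (rule Gterm)
  also have "\<dots> = r * \<epsilon>" unfolding r_def by (simp add: sum_distrib_right)
  finally have main: "Pm xs \<theta>h - Pm xs \<theta> \<le> r * \<epsilon>" using optc cmpb PmP by linarith
  have "r \<le> Q.D" unfolding r_def Q.D_def using cQ by (intro sum_mono) auto
  then have "r < \<beta>" using Q.D_less by simp
  then have second: "r * \<epsilon> < \<beta> * \<epsilon>" using eps by simp
  have "LL f xs \<theta>h - LL f xs \<theta> = ereal (Pm xs \<theta>h - Pm xs \<theta>)" using LLP LLQ by simp
  then show ?thesis using main second rd by simp
qed

end
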